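(* Let $(R,\pi)$ be a permutation rack. Then: (1) $(R,\pi)$ is connected if and only if $\pi$ is a cycle involving all elements of $R$; (2) $(R,\pi)$ is homogeneous if and only if $\pi$ is a product of disjoint cycles all of the same length; (3) $(R,\pi)$ is irreducible if and only if $\pi\neq\mathrm{id}_R$ or $R$ has at most one element.
   Context: A rack is a set $R$ with a binary operation $\rhd$ such that every left multiplication $\ell_a\colon b\mapsto a\rhd b$ is a bijection and $a\rhd(b\rhd c)=(a\rhd b)\rhd(a\rhd c)$ for all $a,b,c$. A permutation rack $(R,\pi)$ is a set $R$ with a permutation $\pi$ of $R$ and operation $a\rhd b=\pi(b)$ for all $a,b\in R$. The inner automorphism group $\mathrm{Inn}(R)$ is the subgroup of the symmetric group on $R$ generated by all $\ell_a$; a rack is connected if $\mathrm{Inn}(R)$ has exactly one orbit on $R$, and homogeneous if the automorphism group $\mathrm{Aut}(R)$ has exactly one orbit on $R$. For racks $S,T$, their disjoint union $S\sqcup T$ is the rack on the disjoint union of sets with $a\rhd b$ as in $S$ or $T$ when $a,b$ lie in the same one, and $a\rhd b=b$ otherwise. A rack $R$ is irreducible if $R\neq\emptyset$ and whenever $R=S\sqcup T$ as racks (i.e. $S,T$ are disjoint subsets with union $R$, each closed under $\rhd$, such that $s\rhd t=t$ and $t\rhd s=s$ for all $s\in S,t\in T$), one of $S,T$ is empty. *)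

theory Defs
  imports "HOL-Combinatorics.Permutations" "HOL-Library.Equipollence"
begin

text \<open>A rack on carrier R with operation op (op a b = a |> b).\<close>

definition rack_closed :: "'a set \<Rightarrow> ('a \<Rightarrow> 'a \<Rightarrow> 'a) \<Rightarrow> bool" where
  "rack_closed S op \<longleftrightarrow> (\<forall>a\<in>S. \<forall>b\<in>S. op a b \<in> S)"

definition lmul :: "'a set \<Rightarrow> ('a \<Rightarrow> 'a \<Rightarrow> 'a) \<Rightarrow> 'a \<Rightarrow> 'a \<Rightarrow> 'a" where
  "lmul R op a = (\<lambda>x. if x \<in> R then op a x else x)"

inductive_set inn :: "'a set \<Rightarrow> ('a \<Rightarrow> 'a \<Rightarrow> 'a) \<Rightarrow> ('a \<Rightarrow> 'a) set"
  for R op where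
  inn_id: "id \<in> inn R op"
| inn_mul: "g \<in> inn R op \<Longrightarrow> a \<in> R \<Longrightarrow> lmul R op a \<circ> g \<in> inn R op"
| inn_inv: "g \<in> inn R op \<Longrightarrow> a \<in> R \<Longrightarrow> inv (lmul R op a) \<circ> g \<in> inn R op"

definition rack_connected :: "'a set \<Rightarrow> ('a \<Rightarrow> 'a \<Rightarrow> 'a) \<Rightarrow> bool" where
  "rack_connected R op \<longleftrightarrow> R \<noteq> {} \<and> (\<forall>x\<in>R. \<forall>y\<in>R. \<exists>g\<in>inn R op. g x = y)"

definition rack_aut :: "'a set \<Rightarrow> ('a \<Rightarrow> 'a \<Rightarrow> 'a) \<Rightarrow> ('a \<Rightarrow> 'a) \<Rightarrow> bool" where
  "rack_aut R op f \<longleftrightarrow> bij_betw f R R \<and> (\<forall>a\<in>R. \<forall>b\<in>R. f (op a b) = op (f a) (f b))"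

definition rack_homogeneous :: "'a set \<Rightarrow> ('a \<Rightarrow> 'a \<Rightarrow> 'a) \<Rightarrow> bool" where
  "rack_homogeneous R op \<longleftrightarrow> R \<noteq> {} \<and> (\<forall>x\<in>R. \<forall>y\<in>R. \<exists>f. rack_aut R op f \<and> f x = y)"

definition rack_irreducible :: "'a set \<Rightarrow> ('a \<Rightarrow> 'a \<Rightarrow> 'a) \<Rightarrow> bool" where
  "rack_irreducible R op \<longleftrightarrow> R \<noteq> {} \<and>
     (\<forall>S T. S \<inter> T = {} \<and> S \<union> T = R \<and> rack_closed S op \<and> rack_closed T op \<and>
        (\<forall>s\<in>S. \<forall>t\<in>T. op s t = t \<and> op t s = s) \<longrightarrow> S = {} \<or> T = {})"

definition perm_rack_op :: "('a \<Rightarrow> 'a) \<Rightarrow> 'a \<Rightarrow> 'a \<Rightarrow> 'a" where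
  "perm_rack_op \<pi> = (\<lambda>a b. \<pi> b)"

definition perm_cycle :: "('a \<Rightarrow> 'a) \<Rightarrow> 'a \<Rightarrow> 'a set" where
  "perm_cycle \<pi> x = {(\<pi> ^^ n) x | n. True} \<union> {(inv \<pi> ^^ n) x | n. True}"

end

theory Submission
  imports Defs
begin

locale prk =
  fixes R :: "'a set" and p :: "'a \<Rightarrow> 'a"
  assumes perm: "p permutes R"
begin

definition q where "q = inv p"
definition P :: "int \<Rightarrow> 'a \<Rightarrow> 'a" where
  "P k = (if k \<ge> 0 then p ^^ nat k else q ^^ nat (-k))"

lemma bij_p: "bij p" using perm permutes_bij by blast

lemma pq[simp]: "p (q z) = z"
  unfolding q_def using bij_p by (simp add: bij_is_surj surj_f_inv_f)
lemma qp[simp]: "q (p z) = z"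
  unfolding q_def using bij_p by (simp add: bij_is_inj inv_f_f)
lemma pq_comp: "p \<circ> q = id" "q \<circ> p = id" by (auto simp: fun_eq_iff)

lemma P_nat: "P (int m) = p ^^ m" by (simp add: P_def)
lemma P_neg: "P (- int m) = q ^^ m" by (cases "m = 0") (auto simp: P_def)
lemma P_0[simp]: "P 0 = id" by (simp add: P_def)

lemma P_succ: "P (k+1) = p \<circ> P k"
proof (cases "k \<ge> 0")
  case True
  then have "nat (k+1) = Suc (nat k)" by simp
  then show ?thesis using True by (simp add: P_def)
next
  case False
  define m where "m = nat (-k) - 1"
  have k: "k = - int (Suc m)" using False unfolding m_def by simp
  have "k + 1 = - int m" using k by simp
  then have "P (k+1) = q ^^ m" using P_neg by simp
  moreover have "P k = q \<circ> q ^^ m" using k P_neg[of "Suc m"] by simp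
  ultimately show ?thesis by (simp add: fun_eq_iff)
qed

lemma P_pred: "P (k - 1) = q \<circ> P k"
proof -
  have "P k = p \<circ> P (k - 1)" using P_succ[of "k - 1"] by simp
  then show ?thesis by (simp add: fun_eq_iff)
qed

lemma P_add: "P (a + b) = P a \<circ> P b"
proof (induction a rule: int_induct[where k=0])
  case base
  then show ?case by simp
next
  case (step1 i)
  have "P (i + 1 + b) = P (i + b + 1)" by (simp add: algebra_simps)
  also have "\<dots> = p \<circ> P (i + b)" by (rule P_succ)
  also have "\<dots> = P (i+1) \<circ> P b" using step1 P_succ[of i] by (simp add: fun_eq_iff)
  finally show ?case .
next
  case (step2 i)
  have "P (i - 1 + b) = P (i + b - 1)" by (simp add: algebra_simps)
  also have "\<dots> = q \<circ> P (i + b)" by (rule P_pred)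
  also have "\<dots> = P (i - 1) \<circ> P b" using step2 P_pred[of i] by (simp add: fun_eq_iff)
  finally show ?case .
qed

lemma P_app: "P (a + b) z = P a (P b z)" using P_add by simp

lemma P_1: "P 1 = p" using P_succ[of 0] by simp

lemma P_comm: "P k (p z) = p (P k z)"
  using P_app[of k 1 z] P_app[of 1 k z] by (simp add: P_1 add.commute)

lemma q_permutes: "q permutes R" unfolding q_def using perm by (rule permutes_inv)

lemma funpow_permutes: "f permutes R \<Longrightarrow> (f ^^ n) permutes R"
  by (induct n) (auto simp: permutes_id permutes_compose)

lemma P_permutes: "P k permutes R"
  unfolding P_def using funpow_permutes perm q_permutes by auto

lemma P_in: "x \<in> R \<Longrightarrow> P k x \<in> R"
  using P_permutes permutes_in_image by metis

definition C where "C x = range (\<lambda>k. P k x)"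

lemma perm_cycle_C: "perm_cycle p x = C x"
proof
  show "perm_cycle p x \<subseteq> C x"
  proof
    fix z assume "z \<in> perm_cycle p x"
    then obtain n where "z = (p ^^ n) x \<or> z = (q ^^ n) x"
      unfolding perm_cycle_def q_def by blast
    then have "z = P (int n) x \<or> z = P (- int n) x" using P_nat P_neg by simp
    then show "z \<in> C x" unfolding C_def by blast
  qed
next
  show "C x \<subseteq> perm_cycle p x"
  proof
    fix z assume "z \<in> C x"
    then obtain k where z: "z = P k x" unfolding C_def by auto
    show "z \<in> perm_cycle p x"
    proof (cases "k \<ge> 0")
      case True
      then have "z = (p ^^ nat k) x" using z P_def by simp
      then show ?thesis unfolding perm_cycle_def by auto
    next
      case False
      then have "z = (inv p ^^ nat (-k)) x" using z P_def q_def by simp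
      then show ?thesis unfolding perm_cycle_def by auto
    qed
  qed
qed

lemma C_sub: "x \<in> R \<Longrightarrow> C x \<subseteq> R" unfolding C_def using P_in by auto

lemma self_C: "x \<in> C x" unfolding C_def by (metis P_0 id_apply rangeI)

lemma C_same: assumes "z \<in> C x" shows "C z = C x"
proof -
  obtain j where z: "z = P j x" using assms unfolding C_def by auto
  have "P k z = P (k + j) x" for k using z P_app by simp
  moreover have "P k x = P (k - j) z" for k using z P_app[of "k - j" j x] by simp
  show ?thesis
  proof
    show "C z \<subseteq> C x" unfolding C_def using \<open>\<And>k. P k z = P (k + j) x\<close> by auto
    show "C x \<subseteq> C z" unfolding C_def using \<open>\<And>k. P k x = P (k - j) z\<close> by auto
  qed
qed

lemma C_disj: "C x \<noteq> C y \<Longrightarrow> C x \<inter> C y = {}"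
  using C_same by blast


lemma P_inv_fix: "P k x = x \<Longrightarrow> P (-k) x = x"
  using P_app[of "-k" k x] by simp

lemma P_mult_fix: assumes "P n x = x" shows "P (n * m) x = x"
proof (induction m rule: int_induct[where k=0])
  case base then show ?case by simp
next
  case (step1 i)
  have "P (n * (i + 1)) x = P (n * i) (P n x)" using P_app[of "n*i" n x] by (simp add: algebra_simps)
  then show ?case using step1 assms by simp
next
  case (step2 i)
  have "P (n * (i - 1)) x = P (n * i) (P (-n) x)" using P_app[of "n*i" "-n" x] by (simp add: algebra_simps)
  then show ?case using step2 assms P_inv_fix[OF assms] by simp
qed

lemma P_mod: assumes "P n x = x" shows "P k x = P (k mod n) x"
  using P_app[of "k mod n" "n*(k div n)" x] P_mult_fix[OF assms, of "k div n"]
  by (simp add: mod_mult_div_eq)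

lemma C_fin: assumes "n > 0" "P n x = x" shows "C x = (\<lambda>k. P k x) ` {0..<n}"
proof
  show "C x \<subseteq> (\<lambda>k. P k x) ` {0..<n}"
  proof
    fix z assume "z \<in> C x"
    then obtain k where z: "z = P k x" unfolding C_def by auto
    have "z = P (k mod n) x" using z P_mod[OF assms(2)] by simp
    moreover have "k mod n \<in> {0..<n}" using assms(1) by simp
    ultimately show "z \<in> (\<lambda>k. P k x) ` {0..<n}" by blast
  qed
qed (auto simp: C_def)

lemma C_infinite: assumes "infinite (C x)" shows "P k x = x \<longleftrightarrow> k = 0"
proof
  assume a: "P k x = x"
  show "k = 0"
  proof (rule ccontr)
    assume "k \<noteq> 0"
    then have "\<bar>k\<bar> > 0" "P \<bar>k\<bar> x = x" using a P_inv_fix[OF a] by (auto simp: abs_if)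
    then have "C x = (\<lambda>k. P k x) ` {0..<\<bar>k\<bar>}" by (rule C_fin)
    then have "finite (C x)" by simp
    then show False using assms by simp
  qed
qed simp

lemma C_finite: assumes fin: "finite (C x)" shows "P k x = x \<longleftrightarrow> int (card (C x)) dvd k"
proof -
  let ?f = "\<lambda>i::nat. P (int i) x"
  have "range ?f \<subseteq> C x" unfolding C_def by auto
  then have "finite (range ?f)" using fin finite_subset by blast
  then have "\<not> inj ?f" using finite_imageD by blast
  then obtain i j where ij: "i < j" "?f i = ?f j"
    unfolding inj_def by (metis linorder_neqE_nat)
  have "P (int j - int i) x = P (- int i) (P (int j) x)" using P_app[of "- int i" "int j" x] by simp
  also have "\<dots> = P (- int i) (P (int i) x)" using ij by simp
  also have "\<dots> = x" using P_app[of "- int i" "int i" x] by simp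
  finally have "P (int (j - i)) x = x" using ij by (simp add: of_nat_diff)
  then have ex: "\<exists>n. 0 < n \<and> P (int n) x = x" using ij by (intro exI[of _ "j - i"]) simp
  define d where "d = (LEAST n. 0 < n \<and> P (int n) x = x)"
  have d: "0 < d" "P (int d) x = x" using LeastI_ex[OF ex] unfolding d_def by auto
  have dmin: "P (int m) x \<noteq> x" if "0 < m" "m < d" for m
    using not_less_Least[of m "\<lambda>n. 0 < n \<and> P (int n) x = x"] that unfolding d_def by auto
  have iff: "P k x = x \<longleftrightarrow> int d dvd k" for k
  proof
    assume a: "P k x = x"
    have "P (k mod int d) x = x" using P_mod[OF d(2), of k] a by simp
    moreover have "0 \<le> k mod int d" "k mod int d < int d" using d(1) by auto
    moreover have "\<not> (0 < k mod int d)"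
    proof
      assume pos: "0 < k mod int d"
      have "P (int (nat (k mod int d))) x = x" using pos \<open>P (k mod int d) x = x\<close> by simp
      moreover have "0 < nat (k mod int d)" "nat (k mod int d) < d" using pos \<open>k mod int d < int d\<close> by auto
      ultimately show False using dmin by blast
    qed
    ultimately have "k mod int d = 0" by simp
    then show "int d dvd k" by (simp add: dvd_eq_mod_eq_0)
  next
    assume "int d dvd k"
    then obtain m where "k = int d * m" by (auto elim: dvdE)
    then show "P k x = x" using P_mult_fix[OF d(2)] by simp
  qed
  have inj: "inj_on (\<lambda>k. P k x) {0..<int d}"
  proof (rule inj_onI)
    fix a b assume ab: "a \<in> {0..<int d}" "b \<in> {0..<int d}" "P a x = P b x"
    have "P (a - b) x = P a (P (-b) x)" using P_app[of a "-b" x] by simp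
    also have "\<dots> = P (-b) (P a x)" using P_app[of a "-b" x] P_app[of "-b" a x] by (simp add: add.commute)
    also have "\<dots> = x" using ab(3) P_app[of "-b" b x] by simp
    finally have "int d dvd (a - b)" using iff by simp
    moreover have "\<bar>a - b\<bar> < int d" using ab by auto
    ultimately show "a = b" using zdvd_imp_le[of "int d" "\<bar>a - b\<bar>"] by (cases "a = b") auto
  qed
  have "card (C x) = d" using C_fin[of "int d" x] d inj by (simp add: card_image)
  then show ?thesis using iff by simp
qed

lemma C_eqpoll_fix: assumes "C x \<approx> C y" shows "P k x = x \<longleftrightarrow> P k y = y"
proof (cases "finite (C x)")
  case True
  then have "finite (C y)" using eqpoll_finite_iff[OF assms] by simp
  moreover have "card (C x) = card (C y)"
    using assms unfolding eqpoll_def using bij_betw_same_card by blast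
  ultimately show ?thesis using C_finite True by simp
next
  case False
  then have "infinite (C y)" using eqpoll_finite_iff[OF assms] by simp
  then show ?thesis using C_infinite False by simp
qed

lemma lmul_eq: "lmul R (perm_rack_op p) a = p"
  unfolding lmul_def perm_rack_op_def using permutes_not_in[OF perm] by (auto simp: fun_eq_iff)

lemma inn_P: "g \<in> inn R (perm_rack_op p) \<Longrightarrow> \<exists>k. g = P k"
proof (induction rule: inn.induct)
  case inn_id
  then show ?case by (intro exI[of _ 0]) simp
next
  case (inn_mul g a)
  then obtain k where "g = P k" by blast
  then show ?case using P_succ[of k] lmul_eq by (intro exI[of _ "k+1"]) simp
next
  case (inn_inv g a)
  then obtain k where "g = P k" by blast
  then show ?case using P_pred[of k] lmul_eq unfolding q_def by (intro exI[of _ "k-1"]) simp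
qed

lemma P_inn: assumes "a \<in> R" shows "P k \<in> inn R (perm_rack_op p)"
proof -
  have A: "p ^^ n \<in> inn R (perm_rack_op p)" for n
  proof (induction n)
    case 0 then show ?case using inn.inn_id[of R "perm_rack_op p"] by (simp add: id_def)
  next
    case (Suc n) then show ?case using inn.inn_mul[OF Suc assms] by (simp only: lmul_eq funpow.simps(2))
  qed
  have B: "q ^^ n \<in> inn R (perm_rack_op p)" for n
  proof (induction n)
    case 0 then show ?case using inn.inn_id[of R "perm_rack_op p"] by (simp add: id_def)
  next
    case (Suc n) then show ?case using inn.inn_inv[OF Suc assms] by (simp only: lmul_eq funpow.simps(2) q_def[symmetric])
  qed
  show ?thesis unfolding P_def using A B by simp
qed

lemma part1: assumes "R \<noteq> {}"
  shows "rack_connected R (perm_rack_op p) \<longleftrightarrow> (\<forall>x\<in>R. perm_cycle p x = R)"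
proof
  assume c: "rack_connected R (perm_rack_op p)"
  show "\<forall>x\<in>R. perm_cycle p x = R"
  proof
    fix x assume x: "x \<in> R"
    have "R \<subseteq> C x"
    proof
      fix y assume "y \<in> R"
      then obtain g where "g \<in> inn R (perm_rack_op p)" "g x = y" using c x unfolding rack_connected_def by blast
      then obtain k where "y = P k x" using inn_P by blast
      then show "y \<in> C x" unfolding C_def by blast
    qed
    then show "perm_cycle p x = R" using C_sub[OF x] perm_cycle_C by blast
  qed
next
  assume a: "\<forall>x\<in>R. perm_cycle p x = R"
  obtain a0 where a0: "a0 \<in> R" using assms by blast
  show "rack_connected R (perm_rack_op p)" unfolding rack_connected_def
  proof (intro conjI assms ballI)
    fix x y assume "x \<in> R" "y \<in> R"
    then have "y \<in> C x" using a perm_cycle_C by blast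
    then obtain k where "y = P k x" unfolding C_def by blast
    then show "\<exists>g\<in>inn R (perm_rack_op p). g x = y" using P_inn[OF a0] by blast
  qed
qed

lemma aut_iff: assumes "R \<noteq> {}"
  shows "rack_aut R (perm_rack_op p) f \<longleftrightarrow> bij_betw f R R \<and> (\<forall>b\<in>R. f (p b) = p (f b))"
  using assms unfolding rack_aut_def perm_rack_op_def by auto

lemma q_in: "b \<in> R \<Longrightarrow> q b \<in> R" using q_permutes permutes_in_image by metis
lemma p_in: "b \<in> R \<Longrightarrow> p b \<in> R" using perm permutes_in_image by metis

lemma aut_comm_P:
  assumes comm: "\<forall>b\<in>R. f (p b) = p (f b)" and z: "z \<in> R"
  shows "f (P k z) = P k (f z)"
proof -
  have fq: "f (q b) = q (f b)" if "b \<in> R" for b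
  proof -
    have "f (p (q b)) = p (f (q b))" using comm q_in[OF that] by blast
    then have "f b = p (f (q b))" by simp
    then show ?thesis by simp
  qed
  show ?thesis
  proof (induction k rule: int_induct[where k=0])
    case base then show ?case by simp
  next
    case (step1 i)
    then show ?case using P_succ[of i] comm P_in[OF z, of i] by simp
  next
    case (step2 i)
    then show ?case using P_pred[of i] fq P_in[OF z, of i] by simp
  qed
qed

definition h where "h u v z = P (SOME k. P k u = z) v"

lemma h_prop: assumes "C u \<approx> C v" shows "h u v (P k u) = P k v"
proof -
  define j where "j = (SOME j. P j u = P k u)"
  have j: "P j u = P k u" unfolding j_def by (rule someI[of _ k]) simp
  have "P (j - k) u = P (-k) (P j u)" using P_app[of "-k" j u] by simp
  also have "\<dots> = u" using j P_app[of "-k" k u] by simp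
  finally have "P (j - k) v = v" using C_eqpoll_fix[OF assms] by blast
  then have "P j v = P k v" using P_app[of k "j - k" v] by simp
  then show ?thesis unfolding h_def j_def by simp
qed

lemma P_m1: "P (-1) = q" using P_neg[of 1] by simp

lemma part2: assumes "R \<noteq> {}"
  shows "rack_homogeneous R (perm_rack_op p) \<longleftrightarrow> (\<forall>x\<in>R. \<forall>y\<in>R. perm_cycle p x \<approx> perm_cycle p y)"
proof
  assume hom: "rack_homogeneous R (perm_rack_op p)"
  show "\<forall>x\<in>R. \<forall>y\<in>R. perm_cycle p x \<approx> perm_cycle p y"
  proof (intro ballI)
    fix x y assume x: "x \<in> R" and y: "y \<in> R"
    obtain f where f: "rack_aut R (perm_rack_op p) f" "f x = y" using hom x y unfolding rack_homogeneous_def by blast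
    then have fb: "bij_betw f R R" and comm: "\<forall>b\<in>R. f (p b) = p (f b)" using aut_iff[OF assms] by auto
    have "f ` C x = C y" unfolding C_def using aut_comm_P[OF comm x] f(2) by (auto simp: image_image)
    moreover have "inj_on f (C x)" using fb C_sub[OF x] bij_betw_def inj_on_subset by metis
    ultimately have "bij_betw f (C x) (C y)" unfolding bij_betw_def by blast
    then show "perm_cycle p x \<approx> perm_cycle p y" unfolding perm_cycle_C eqpoll_def by blast
  qed
next
  assume a: "\<forall>x\<in>R. \<forall>y\<in>R. perm_cycle p x \<approx> perm_cycle p y"
  show "rack_homogeneous R (perm_rack_op p)" unfolding rack_homogeneous_def
  proof (intro conjI assms ballI)
    fix x y assume x: "x \<in> R" and y: "y \<in> R"
    show "\<exists>f. rack_aut R (perm_rack_op p) f \<and> f x = y"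
    proof (cases "C x = C y")
      case True
      then have "y \<in> C x" using self_C by blast
      then obtain k where k: "y = P k x" unfolding C_def by blast
      have "bij_betw (P k) R R" using P_permutes permutes_imp_bij by blast
      then have "rack_aut R (perm_rack_op p) (P k)" using aut_iff[OF assms] P_comm by blast
      then show ?thesis using k by blast
    next
      case False
      then have disj: "C x \<inter> C y = {}" by (rule C_disj)
      have exy: "C x \<approx> C y" using a x y perm_cycle_C by metis
      then have eyx: "C y \<approx> C x" by (rule eqpoll_sym)
      define f where "f z = (if z \<in> C x then h x y z else if z \<in> C y then h y x z else z)" for z
      have fx: "f (P k x) = P k y" for k
        using h_prop[OF exy] unfolding f_def C_def by auto
      have fy: "f (P k y) = P k x" for k
      proof -
        have "P k y \<notin> C x" using disj unfolding C_def by auto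
        then show ?thesis using h_prop[OF eyx] unfolding f_def C_def by auto
      qed
      have fo: "f z = z" if "z \<notin> C x" "z \<notin> C y" for z using that unfolding f_def by simp
      have ff: "f (f z) = z" for z
      proof -
        consider (X) k where "z = P k x" | (Y) k where "z = P k y" | (O) "z \<notin> C x" "z \<notin> C y"
          unfolding C_def by blast
        then show ?thesis
        proof cases
          case (X k) then show ?thesis using fx fy by simp
        next
          case (Y k) then show ?thesis using fx fy by simp
        next
          case O then show ?thesis using fo by simp
        qed
      qed
      have fR: "f z \<in> R" if "z \<in> R" for z
      proof -
        consider (X) k where "z = P k x" | (Y) k where "z = P k y" | (O) "z \<notin> C x" "z \<notin> C y"
          unfolding C_def by blast
        then show ?thesis
        proof cases
          case (X k) then show ?thesis using fx P_in[OF y] by simp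
        next
          case (Y k) then show ?thesis using fy P_in[OF x] by simp
        next
          case O then show ?thesis using fo that by simp
        qed
      qed
      have bij: "bij_betw f R R"
      proof (rule bij_betwI[where g=f])
        show "f \<in> R \<rightarrow> R" using fR by blast
        show "f \<in> R \<rightarrow> R" using fR by blast
      qed (use ff in auto)
      have comm: "f (p b) = p (f b)" if "b \<in> R" for b
      proof -
        consider (X) k where "b = P k x" | (Y) k where "b = P k y" | (O) "b \<notin> C x" "b \<notin> C y"
          unfolding C_def by blast
        then show ?thesis
        proof cases
          case (X k)
          then have "p b = P (k+1) x" using P_succ by simp
          have "f (p b) = f (P (k+1) x)" using \<open>p b = P (k+1) x\<close> by simp
          also have "\<dots> = P (k+1) y" by (rule fx)
          also have "\<dots> = p (f b)" using X fx P_succ by simp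
          finally show ?thesis .
        next
          case (Y k)
          then have "p b = P (k+1) y" using P_succ by simp
          have "f (p b) = f (P (k+1) y)" using \<open>p b = P (k+1) y\<close> by simp
          also have "\<dots> = P (k+1) x" by (rule fy)
          also have "\<dots> = p (f b)" using Y fy P_succ by simp
          finally show ?thesis .
        next
          case O
          have "b \<in> C (p b)" unfolding C_def using P_m1 by (metis qp rangeI)
          then have "p b \<notin> C x" "p b \<notin> C y" using O C_same by blast+
          then show ?thesis using fo O by simp
        qed
      qed
      have "rack_aut R (perm_rack_op p) f" using aut_iff[OF assms] bij comm by blast
      moreover have "f x = y" using fx[of 0] by simp
      ultimately show ?thesis by blast
    qed
  qed
qed

lemma part3: assumes "R \<noteq> {}"
  shows "rack_irreducible R (perm_rack_op p) \<longleftrightarrow> p \<noteq> id \<or> (\<forall>x\<in>R. \<forall>y\<in>R. x = y)"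
proof
  assume irr: "rack_irreducible R (perm_rack_op p)"
  show "p \<noteq> id \<or> (\<forall>x\<in>R. \<forall>y\<in>R. x = y)"
  proof (rule ccontr)
    assume "\<not> ?thesis"
    then obtain x y where pid: "p = id" and xy: "x \<in> R" "y \<in> R" "x \<noteq> y" by blast
    let ?S = "{x}" and ?T = "R - {x}"
    have "?S \<inter> ?T = {} \<and> ?S \<union> ?T = R \<and> rack_closed ?S (perm_rack_op p) \<and> rack_closed ?T (perm_rack_op p) \<and>
        (\<forall>s\<in>?S. \<forall>t\<in>?T. perm_rack_op p s t = t \<and> perm_rack_op p t s = s)"
      using xy pid unfolding rack_closed_def perm_rack_op_def by auto
    then have "?S = {} \<or> ?T = {}" using irr unfolding rack_irreducible_def by blast
    then show False using xy by auto
  qed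
next
  assume a: "p \<noteq> id \<or> (\<forall>x\<in>R. \<forall>y\<in>R. x = y)"
  show "rack_irreducible R (perm_rack_op p)" unfolding rack_irreducible_def
  proof (intro conjI assms allI impI)
    fix S T
    assume st: "S \<inter> T = {} \<and> S \<union> T = R \<and> rack_closed S (perm_rack_op p) \<and> rack_closed T (perm_rack_op p) \<and>
        (\<forall>s\<in>S. \<forall>t\<in>T. perm_rack_op p s t = t \<and> perm_rack_op p t s = s)"
    show "S = {} \<or> T = {}"
    proof (rule ccontr)
      assume "\<not> ?thesis"
      then obtain s t where s: "s \<in> S" and t: "t \<in> T" by blast
      have "p z = z" for z
      proof (cases "z \<in> R")
        case True
        then have "z \<in> S \<or> z \<in> T" using st by blast
        then show ?thesis using st s t unfolding perm_rack_op_def by blast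
      next
        case False
        then show ?thesis using permutes_not_in[OF perm] by blast
      qed
      then have "p = id" by (simp add: fun_eq_iff)
      moreover have "s \<noteq> t" using s t st by blast
      moreover have "s \<in> R" "t \<in> R" using s t st by blast+
      ultimately show False using a by blast
    qed
  qed
qed
end

theorem proposition6p1:
  fixes R :: "'a set" and \<pi> :: "'a \<Rightarrow> 'a"
  assumes "\<pi> permutes R" and "R \<noteq> {}"
  shows "(rack_connected R (perm_rack_op \<pi>) \<longleftrightarrow> (\<forall>x\<in>R. perm_cycle \<pi> x = R))
       \<and> (rack_homogeneous R (perm_rack_op \<pi>) \<longleftrightarrow>
            (\<forall>x\<in>R. \<forall>y\<in>R. perm_cycle \<pi> x \<approx> perm_cycle \<pi> y))
       \<and> (rack_irreducible R (perm_rack_op \<pi>) \<longleftrightarrow> \<pi> \<noteq> id \<or> (\<forall>x\<in>R. \<forall>y\<in>R. x = y))"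
proof -
  interpret prk R \<pi> using assms(1) by unfold_locales
  show ?thesis using part1[OF assms(2)] part2[OF assms(2)] part3[OF assms(2)] by blast
qed

end
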